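(* Let $\Theta\subseteq\mathbb R^d$ be nonempty, closed and convex, let $f:\Theta\times\mathcal Z\to\mathbb R$ be such that $\nabla f(\cdot\,;z)$ is defined on $\Theta$ for each $z$, and suppose Assumption 2 holds with constant $B>0$. Then for any fixed (not depending on the samples) $\theta^{(0)}\in\Theta$, $t\ge0$ and $i_1,\dots,i_t\in[n]$, with probability at least $1-\delta$ over the draw of $z_1,\dots,z_n$, the projected SGD iterate satisfies $$\left|\hat F(\theta^{(t)})-F(\theta^{(t)})\right|\le\frac{Bt}{n}+B\sqrt{\frac{\log(2/\delta)}{2n}}.$$
   Context: $z_1,\dots,z_n$ are i.i.d. from a distribution $\mu$ on a sample space $\mathcal Z$, $Z\sim\mu$; $F(\theta):=\mathbb E_Z[f(\theta;Z)]$, $\hat F(\theta):=\frac1n\sum_{i=1}^nf(\theta;z_i)$. Assumption 2 (bounded deviation, constant $B$): $\sup_{z\in\mathcal Z}f(\theta;z)-\inf_{z\in\mathcal Z}f(\theta;z)\le B$ for all $\theta\in\Theta$. Projected SGD with step size $\eta>0$: $g_i(\theta):=\Pi_\Theta(\theta-\eta\nabla f(\theta;z_i))$ with $\Pi_\Theta$ the Euclidean projection, and $\theta^{(t)}:=g_{i_t}\circ\cdots\circ g_{i_1}(\theta^{(0)})$. *)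

theory Defs
  imports "HOL-Probability.Probability"
begin

definition psgd_step ::
  "'a::euclidean_space set \<Rightarrow> real \<Rightarrow> ('a \<Rightarrow> 'z \<Rightarrow> 'a) \<Rightarrow> 'z \<Rightarrow> 'a \<Rightarrow> 'a" where
  "psgd_step \<Theta> \<eta> grad z \<theta> = closest_point \<Theta> (\<theta> - \<eta> *\<^sub>R grad \<theta> z)"

definition psgd_iter ::
  "'a::euclidean_space set \<Rightarrow> real \<Rightarrow> ('a \<Rightarrow> 'z \<Rightarrow> 'a) \<Rightarrow> (nat \<Rightarrow> 'z) \<Rightarrow> nat list \<Rightarrow> 'a \<Rightarrow> 'a" where
  "psgd_iter \<Theta> \<eta> grad zs idx \<theta>0 = fold (\<lambda>i \<theta>. psgd_step \<Theta> \<eta> grad (zs i) \<theta>) idx \<theta>0"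

definition emp_risk :: "('a \<Rightarrow> 'z \<Rightarrow> real) \<Rightarrow> nat \<Rightarrow> (nat \<Rightarrow> 'z) \<Rightarrow> 'a \<Rightarrow> real" where
  "emp_risk f n zs \<theta> = (1 / real n) * (\<Sum>i=1..n. f \<theta> (zs i))"

definition pop_risk :: "'z measure \<Rightarrow> ('a \<Rightarrow> 'z \<Rightarrow> real) \<Rightarrow> 'a \<Rightarrow> real" where
  "pop_risk M f \<theta> = integral\<^sup>L M (f \<theta>)"

end

theory Submission
  imports Defs
begin

lemma caratheodory_meas:
  fixes f :: "'a::euclidean_space \<Rightarrow> 'z \<Rightarrow> real" and \<Theta> :: "'a set"
  assumes cont: "\<And>z. z \<in> space M \<Longrightarrow> continuous_on \<Theta> (\<lambda>\<theta>. f \<theta> z)"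
    and meas: "\<And>\<theta>. \<theta> \<in> \<Theta> \<Longrightarrow> f \<theta> \<in> borel_measurable M"
    and ne: "\<Theta> \<noteq> {}"
  shows "(\<lambda>(\<theta>,z). f \<theta> z) \<in> borel_measurable (restrict_space borel \<Theta> \<Otimes>\<^sub>M M)"
proof -
  obtain T where T: "countable T" "T \<subseteq> \<Theta>" "\<Theta> \<subseteq> closure T" by (rule separable)
  have Tne: "T \<noteq> {}" using T ne by auto
  define d where "d = from_nat_into T"
  have dT: "d j \<in> T" for j using Tne by (simp add: d_def from_nat_into)
  define J where "J k \<theta> = (LEAST j. dist \<theta> (d j) < 1 / Suc k)" for k :: nat and \<theta>
  have exJ: "\<exists>j. dist \<theta> (d j) < 1 / Suc k" if "\<theta> \<in> \<Theta>" for \<theta> k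
  proof -
    have "\<theta> \<in> closure T" using that T by auto
    then obtain t where "t \<in> T" "dist t \<theta> < 1 / Suc k"
      by (meson closure_approachable of_nat_0_less_iff zero_less_Suc divide_pos_pos zero_less_one)
    moreover obtain j where "t = d j" using \<open>t \<in> T\<close> T(1) unfolding d_def
      by (metis from_nat_into_surj)
    ultimately show ?thesis by (auto simp: dist_commute)
  qed
  have Jdist: "dist \<theta> (d (J k \<theta>)) < 1 / Suc k" if "\<theta> \<in> \<Theta>" for \<theta> k
    unfolding J_def using exJ[OF that, of k] by (metis LeastI_ex)
  let ?N = "restrict_space borel \<Theta> \<Otimes>\<^sub>M M"
  define h where "h k p = f (d (J k (fst p))) (snd p)" for k p
  have hm: "h k \<in> borel_measurable ?N" for k
  proof -
    have "(\<lambda>p. f (d j) (snd p)) \<in> borel_measurable ?N" for j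
      using meas[of "d j"] dT T(2) by (auto intro: measurable_snd'')
    moreover have "(\<lambda>p. J k (fst p)) \<in> measurable ?N (count_space UNIV)"
    proof -
      have fm: "fst \<in> borel_measurable ?N"
        using measurable_fst measurable_restrict_space2_iff
        by (metis measurable_comp measurable_restrict_space1 measurable_ident_sets)
      show ?thesis unfolding J_def
        by (intro measurable_Least) (use fm in measurable)
    qed
    ultimately show ?thesis unfolding h_def
      by (rule measurable_compose_countable)
  qed
  show ?thesis
  proof (rule borel_measurable_LIMSEQ_metric[OF hm])
    fix p assume p: "p \<in> space ?N"
    then have th: "fst p \<in> \<Theta>" and z: "snd p \<in> space M"
      by (auto simp: space_pair_measure space_restrict_space)
    have lim: "(\<lambda>k. d (J k (fst p))) \<longlonglongrightarrow> fst p"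
    proof (rule metric_LIMSEQ_I)
      fix r :: real assume "0 < r"
      then obtain N where N: "inverse (real (Suc N)) < r" using reals_Archimedean by blast
      show "\<exists>no. \<forall>k\<ge>no. dist (d (J k (fst p))) (fst p) < r"
      proof (intro exI allI impI)
        fix k assume "N \<le> k"
        then have "1 / real (Suc k) \<le> inverse (real (Suc N))"
          by (simp add: divide_inverse inverse_le_imp_le frac_le)
        then show "dist (d (J k (fst p))) (fst p) < r"
          using Jdist[OF th, of k] N by (simp add: dist_commute)
      qed
    qed
    have "(\<lambda>k. f (d (J k (fst p))) (snd p)) \<longlonglongrightarrow> f (fst p) (snd p)"
      by (rule continuous_on_tendsto_compose[OF cont[OF z] lim th, simplified]) (use dT T(2) in \<open>auto intro!: always_eventually\<close>)
    then show "(\<lambda>k. h k p) \<longlonglongrightarrow> (\<lambda>(\<theta>,z). f \<theta> z) p"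
      by (simp add: h_def o_def case_prod_beta)
  qed
qed

lemma iter_in:
  assumes "closed \<Theta>" "\<Theta> \<noteq> {}" "\<theta>0 \<in> \<Theta>"
  shows "psgd_iter \<Theta> \<eta> grad zs idx \<theta>0 \<in> \<Theta>"
  using assms(3) unfolding psgd_iter_def
proof (induction idx arbitrary: \<theta>0)
  case Nil then show ?case by simp
next
  case (Cons i l)
  have "psgd_step \<Theta> \<eta> grad (zs i) \<theta>0 \<in> \<Theta>"
    unfolding psgd_step_def by (rule closest_point_in_set[OF assms(1,2)])
  then show ?case using Cons.IH by simp
qed

lemma iter_cong:
  assumes "\<And>i. i \<in> set idx \<Longrightarrow> zs i = zs' i"
  shows "psgd_iter \<Theta> \<eta> grad zs idx \<theta>0 = psgd_iter \<Theta> \<eta> grad zs' idx \<theta>0"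
  unfolding psgd_iter_def by (rule fold_cong) (use assms in auto)

lemma iter_meas:
  fixes \<Theta> :: "'a::euclidean_space set" and grad :: "'a \<Rightarrow> 'z \<Rightarrow> 'a"
  assumes cl: "closed \<Theta>" and ne: "\<Theta> \<noteq> {}" and cv: "convex \<Theta>"
    and gm: "(\<lambda>(x, z). grad x z) \<in> borel_measurable (restrict_space borel \<Theta> \<Otimes>\<^sub>M M)"
    and l: "set l \<subseteq> I"
    and h: "h \<in> measurable (PiM I (\<lambda>_. M)) (restrict_space borel \<Theta>)"
  shows "(\<lambda>zs. fold (\<lambda>i \<theta>. psgd_step \<Theta> \<eta> grad (zs i) \<theta>) l (h zs)) \<in> measurable (PiM I (\<lambda>_. M)) (restrict_space borel \<Theta>)"
  using l h
proof (induction l arbitrary: h)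
  case Nil then show ?case by simp
next
  case (Cons i l)
  let ?P = "PiM I (\<lambda>_. M)"
  have i: "i \<in> I" using Cons.prems by auto
  have hb: "h \<in> borel_measurable ?P"
    using Cons.prems(2) measurable_restrict_space2_iff by blast
  have pm: "(\<lambda>zs. (h zs, zs i)) \<in> measurable ?P (restrict_space borel \<Theta> \<Otimes>\<^sub>M M)"
    using Cons.prems(2) i by (intro measurable_Pair) auto
  have gr: "(\<lambda>zs. grad (h zs) (zs i)) \<in> borel_measurable ?P"
    using measurable_comp[OF pm gm] by (simp add: o_def)
  have arg: "(\<lambda>zs. h zs - \<eta> *\<^sub>R grad (h zs) (zs i)) \<in> borel_measurable ?P"
    using hb gr by measurable
  have cp: "(\<lambda>zs. closest_point \<Theta> (h zs - \<eta> *\<^sub>R grad (h zs) (zs i))) \<in> borel_measurable ?P"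
    by (rule borel_measurable_continuous_on[OF continuous_on_closest_point[OF cv cl ne] arg])
  have "(\<lambda>zs. psgd_step \<Theta> \<eta> grad (zs i) (h zs)) \<in> measurable ?P (restrict_space borel \<Theta>)"
    unfolding psgd_step_def
    by (rule measurable_restrict_space2) (use cp closest_point_in_set[OF cl ne] in auto)
  from Cons.IH[OF _ this] Cons.prems(1) show ?case by simp
qed

lemma PiM_comp_distr:
  assumes "prob_space M" "i \<in> R"
  shows "distr (PiM R (\<lambda>_. M)) M (\<lambda>y. y i) = M"
proof -
  interpret product_prob_space "\<lambda>_. M" R
    unfolding product_prob_space_def product_prob_space_axioms_def product_sigma_finite_def
    using assms(1) prob_space_imp_sigma_finite by blast
  show ?thesis using PiM_component[OF assms(2)] .
qed

lemma indep_coords: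
  assumes M: "prob_space M" and R: "R \<noteq> {}"
  shows "prob_space.indep_vars (PiM R (\<lambda>_. M)) (\<lambda>_. M) (\<lambda>i y. y i) R"
proof -
  interpret P: prob_space "PiM R (\<lambda>_. M)" by (rule prob_space_PiM) (use M in auto)
  have rv: "\<And>i. i \<in> R \<Longrightarrow> (\<lambda>y. y i) \<in> measurable (PiM R (\<lambda>_. M)) M" by simp
  have "distr (PiM R (\<lambda>_. M)) (PiM R (\<lambda>_. M)) (\<lambda>x. \<lambda>i\<in>R. x i) = distr (PiM R (\<lambda>_. M)) (PiM R (\<lambda>_. M)) (\<lambda>x. x)"
    by (rule distr_cong) (simp_all add: space_PiM PiE_def extensional_restrict)
  also have "\<dots> = PiM R (\<lambda>_. M)" by (rule distr_id)
  also have "\<dots> = PiM R (\<lambda>i. distr (PiM R (\<lambda>_. M)) M (\<lambda>y. y i))"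
    by (rule PiM_cong) (simp_all add: PiM_comp_distr[OF M])
  finally have eq: "distr (PiM R (\<lambda>_. M)) (PiM R (\<lambda>_. M)) (\<lambda>x. \<lambda>i\<in>R. x i) = PiM R (\<lambda>i. distr (PiM R (\<lambda>_. M)) M (\<lambda>y. y i))" .
  have iff: "P.indep_vars (\<lambda>_. M) (\<lambda>i y. y i) R \<longleftrightarrow> distr (PiM R (\<lambda>_. M)) (PiM R (\<lambda>_. M)) (\<lambda>x. \<lambda>i\<in>R. x i) = PiM R (\<lambda>i. distr (PiM R (\<lambda>_. M)) M (\<lambda>y. y i))"
    by (rule P.indep_vars_iff_distr_eq_PiM'[OF R]) (rule rv)
  show ?thesis using iff eq by (rule iffD2)
qed

lemma PiM_comp_integral:
  fixes g :: "'z \<Rightarrow> real"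
  assumes "prob_space M" "i \<in> R" "g \<in> borel_measurable M"
  shows "(\<integral>y. g (y i) \<partial>PiM R (\<lambda>_. M)) = integral\<^sup>L M g"
proof -
  have "integral\<^sup>L M g = integral\<^sup>L (distr (PiM R (\<lambda>_. M)) M (\<lambda>y. y i)) g"
    by (subst PiM_comp_distr[OF assms(1,2)]) (rule refl)
  also have "\<dots> = (\<integral>y. g (y i) \<partial>PiM R (\<lambda>_. M))"
    by (rule integral_distr) (use assms in simp_all)
  finally show ?thesis ..
qed

lemma hoeff_section:
  fixes g :: "'z \<Rightarrow> real"
  assumes M: "prob_space M" and fin: "finite R" and R: "R \<noteq> {}"
    and gm: "g \<in> borel_measurable M"
    and gB: "\<And>z z'. z \<in> space M \<Longrightarrow> z' \<in> space M \<Longrightarrow> g z - g z' \<le> B"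
    and \<epsilon>: "\<epsilon> \<ge> 0" and B: "B > 0"
  shows "measure (PiM R (\<lambda>_. M)) {y \<in> space (PiM R (\<lambda>_. M)). \<epsilon> \<le> \<bar>\<Sum>i\<in>R. (g (y i) - integral\<^sup>L M g)\<bar>}
           \<le> 2 * exp (-2 * \<epsilon>\<^sup>2 / (real (card R) * B\<^sup>2))"
proof -
  interpret M: prob_space M by (rule M)
  interpret P: prob_space "PiM R (\<lambda>_. M)" by (rule prob_space_PiM) (use M in auto)
  obtain z0 where z0: "z0 \<in> space M" using M.not_empty by blast
  define a where "a = (INF z\<in>space M. g z)"
  have bdd: "bdd_below (g ` space M)"
    by (rule bdd_belowI[of _ "g z0 - B"]) (use gB z0 in force)
  have ab: "g z \<in> {a..a+B}" if z: "z \<in> space M" for z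
  proof -
    have "a \<le> g z" unfolding a_def by (rule cINF_lower[OF bdd z])
    moreover have "g z - B \<le> a" unfolding a_def
      by (rule cINF_greatest) (use M.not_empty gB z in force)+
    ultimately show ?thesis by simp
  qed
  have exp_i: "P.expectation (\<lambda>y. g (y i)) = integral\<^sup>L M g" if "i \<in> R" for i
    by (rule PiM_comp_integral[OF M that gm])
  interpret H: Hoeffding_ineq "PiM R (\<lambda>_. M)" R "\<lambda>i y. g (y i)" "\<lambda>_. a" "\<lambda>_. a + B"
     "\<Sum>i\<in>R. P.expectation (\<lambda>y. g (y i))"
  proof unfold_locales
    show "finite R" by (rule fin)
    show "P.indep_vars (\<lambda>_. borel) (\<lambda>i y. g (y i)) R"
      by (rule P.indep_vars_compose2[OF indep_coords[OF M R]]) (use gm in simp)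
    fix i assume "i \<in> R"
    then show "AE y in PiM R (\<lambda>_. M). g (y i) \<in> {a..a + B}"
      by (intro AE_I2 ab) (auto simp: space_PiM)
  qed simp
  have mu: "(\<Sum>i\<in>R. P.expectation (\<lambda>y. g (y i))) = real (card R) * integral\<^sup>L M g"
    using exp_i by simp
  have pos: "(\<Sum>i\<in>R. ((a + B) - a)\<^sup>2) > 0" using fin R B by (simp add: card_gt_0_iff)
  have "{y \<in> space (PiM R (\<lambda>_. M)). \<epsilon> \<le> \<bar>\<Sum>i\<in>R. (g (y i) - integral\<^sup>L M g)\<bar>}
      = {y \<in> space (PiM R (\<lambda>_. M)). \<bar>(\<Sum>i\<in>R. g (y i)) - (\<Sum>i\<in>R. P.expectation (\<lambda>y. g (y i)))\<bar> \<ge> \<epsilon>}"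
    by (simp add: mu sum_subtractf)
  also have "P.prob \<dots> \<le> 2 * exp (-2 * \<epsilon>\<^sup>2 / (\<Sum>i\<in>R. ((a + B) - a)\<^sup>2))"
    by (rule H.Hoeffding_ineq_abs_ge[OF \<epsilon> pos])
  also have "(\<Sum>i\<in>R. ((a + B) - a)\<^sup>2) = real (card R) * B\<^sup>2" by simp
  finally show ?thesis .
qed

theorem corollary2:
  fixes \<Theta> :: "'a::euclidean_space set"
    and M :: "'z measure"
    and f :: "'a \<Rightarrow> 'z \<Rightarrow> real"
    and grad :: "'a \<Rightarrow> 'z \<Rightarrow> 'a"
    and B \<eta> \<delta> :: real and n :: nat and idx :: "nat list" and \<theta>0 :: 'a
  assumes "prob_space M"
    and "\<Theta> \<noteq> {}" and "closed \<Theta>" and "convex \<Theta>"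
    and "\<And>\<theta>. \<theta> \<in> \<Theta> \<Longrightarrow> f \<theta> \<in> borel_measurable M"
    and "\<And>z \<theta>. z \<in> space M \<Longrightarrow> \<theta> \<in> \<Theta> \<Longrightarrow>
           ((\<lambda>x. f x z) has_derivative (\<lambda>h. grad \<theta> z \<bullet> h)) (at \<theta> within \<Theta>)"
    and "(\<lambda>(x, z). grad x z) \<in> borel_measurable (restrict_space borel \<Theta> \<Otimes>\<^sub>M M)"
    and "B > 0"
    and "\<And>\<theta> z z'. \<theta> \<in> \<Theta> \<Longrightarrow> z \<in> space M \<Longrightarrow> z' \<in> space M \<Longrightarrow> f \<theta> z - f \<theta> z' \<le> B"
    and "\<eta> > 0" and "n > 0" and "0 < \<delta>" and "\<delta> < 1"
    and "\<theta>0 \<in> \<Theta>" and "set idx \<subseteq> {1..n}"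
  shows "\<exists>E \<in> sets (PiM {1..n} (\<lambda>_. M)).
           measure (PiM {1..n} (\<lambda>_. M)) E \<ge> 1 - \<delta> \<and>
           (\<forall>zs \<in> E.
              \<bar>emp_risk f n zs (psgd_iter \<Theta> \<eta> grad zs idx \<theta>0)
               - pop_risk M f (psgd_iter \<Theta> \<eta> grad zs idx \<theta>0)\<bar>
              \<le> B * real (length idx) / real n + B * sqrt (ln (2 / \<delta>) / (2 * real n)))"
  proof -
  interpret M: prob_space M by (rule assms(1))
  define P where "P = PiM {1..n} (\<lambda>_. M)"
  define S where "S = set idx"
  define R where "R = {1..n} - S"
  define th where "th zs = psgd_iter \<Theta> \<eta> grad zs idx \<theta>0" for zs
  define F where "F = pop_risk M f"
  define L where "L = ln (2 / \<delta>)"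
  define \<epsilon> where "\<epsilon> = real n * B * sqrt (L / (2 * real n))"
  have L: "L > 0" unfolding L_def using assms(12,13) by simp
  have \<epsilon>pos: "\<epsilon> > 0" unfolding \<epsilon>_def using L assms(8,11) by simp
  have SI: "S \<subseteq> {1..n}" using assms(15) S_def by simp
  have thin: "th zs \<in> \<Theta>" for zs
    unfolding th_def by (rule iter_in) (use assms in auto)
  have thmeas: "th \<in> measurable P (restrict_space borel \<Theta>)"
  proof -
    have "(\<lambda>zs. fold (\<lambda>i \<theta>. psgd_step \<Theta> \<eta> grad (zs i) \<theta>) idx ((\<lambda>_. \<theta>0) zs)) \<in> measurable P (restrict_space borel \<Theta>)"
      unfolding P_def
      by (rule iter_meas[OF assms(3,2,4,7,15)]) (use assms(14) in \<open>auto simp: space_restrict_space\<close>)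
    moreover have "th = (\<lambda>zs. fold (\<lambda>i \<theta>. psgd_step \<Theta> \<eta> grad (zs i) \<theta>) idx \<theta>0)" by (simp add: fun_eq_iff th_def psgd_iter_def)
    ultimately show ?thesis by simp
  qed
  have cont: "continuous_on \<Theta> (\<lambda>\<theta>. f \<theta> z)" if z: "z \<in> space M" for z
    unfolding continuous_on_eq_continuous_within
    using has_derivative_continuous[OF assms(6)[OF z]] by blast
  have fm: "(\<lambda>(\<theta>,z). f \<theta> z) \<in> borel_measurable (restrict_space borel \<Theta> \<Otimes>\<^sub>M M)"
    by (rule caratheodory_meas[OF cont assms(5) assms(2)])
  have Fm: "F \<in> borel_measurable (restrict_space borel \<Theta>)"
    unfolding F_def pop_risk_def[abs_def]
    by (rule M.borel_measurable_lebesgue_integral) (use fm in simp)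
  have integ: "integrable M (f \<theta>)" if th: "\<theta> \<in> \<Theta>" for \<theta>
  proof -
    obtain z0 where z0: "z0 \<in> space M" using M.not_empty by blast
    show ?thesis
    proof (rule M.integrable_const_bound[where B="\<bar>f \<theta> z0\<bar> + B"])
      show "AE x in M. norm (f \<theta> x) \<le> \<bar>f \<theta> z0\<bar> + B"
        using assms(9)[OF th _ z0] assms(9)[OF th z0] by (intro AE_I2) force
    qed (rule assms(5)[OF th])
  qed
  have bnd: "\<bar>f \<theta> z - F \<theta>\<bar> \<le> B" if th: "\<theta> \<in> \<Theta>" and z: "z \<in> space M" for \<theta> z
  proof -
    have "F \<theta> \<le> f \<theta> z + B"
      unfolding F_def pop_risk_def
      using M.integral_le_const[OF integ[OF th], of "f \<theta> z + B"] assms(9)[OF th _ z]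
      by (force intro: AE_I2)
    moreover have "f \<theta> z - B \<le> F \<theta>"
      unfolding F_def pop_risk_def
      using M.integral_ge_const[OF integ[OF th], of "f \<theta> z - B"] assms(9)[OF th z]
      by (force intro: AE_I2)
    ultimately show ?thesis by linarith
  qed
  have fcomp: "(\<lambda>zs. f (th zs) (zs i)) \<in> borel_measurable P" if i: "i \<in> {1..n}" for i
  proof -
    have "(\<lambda>zs. (th zs, zs i)) \<in> measurable P (restrict_space borel \<Theta> \<Otimes>\<^sub>M M)"
      using thmeas i unfolding P_def by (intro measurable_Pair) auto
    from measurable_comp[OF this fm] show ?thesis by (simp add: o_def)
  qed
  have Fcomp: "(\<lambda>zs. F (th zs)) \<in> borel_measurable P"
    using measurable_comp[OF thmeas Fm] by (simp add: o_def)
  define G where "G = {zs \<in> space P. \<bar>\<Sum>i\<in>R. (f (th zs) (zs i) - F (th zs))\<bar> < \<epsilon>}"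
  have Gm: "G \<in> sets P"
  proof -
    have "(\<lambda>zs. \<bar>\<Sum>i\<in>R. (f (th zs) (zs i) - F (th zs))\<bar>) \<in> borel_measurable P"
      using fcomp Fcomp unfolding R_def by (intro borel_measurable_abs borel_measurable_sum borel_measurable_diff) auto
    then show ?thesis unfolding G_def by measurable
  qed
  have Ggood: "\<bar>emp_risk f n zs (th zs) - pop_risk M f (th zs)\<bar>
        \<le> B * real (length idx) / real n + B * sqrt (ln (2 / \<delta>) / (2 * real n))" if zs: "zs \<in> G" for zs
  proof -
    define \<theta> where "\<theta> = th zs"
    have \<theta>in: "\<theta> \<in> \<Theta>" unfolding \<theta>_def by (rule thin)
    have zsP: "zs \<in> space P" and Rb: "\<bar>\<Sum>i\<in>R. (f \<theta> (zs i) - F \<theta>)\<bar> < \<epsilon>"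
      using zs unfolding G_def \<theta>_def by auto
    have zsi: "zs i \<in> space M" if "i \<in> {1..n}" for i
      using zsP that unfolding P_def by (auto simp: space_PiM)
    define X where "X = (\<Sum>i\<in>S. (f \<theta> (zs i) - F \<theta>))"
    define Y where "Y = (\<Sum>i\<in>R. (f \<theta> (zs i) - F \<theta>))"
    have "emp_risk f n zs \<theta> - pop_risk M f \<theta> = (1 / real n) * (\<Sum>i=1..n. (f \<theta> (zs i) - F \<theta>))"
      unfolding emp_risk_def F_def using assms(11) by (simp add: sum_subtractf field_simps)
    also have "(\<Sum>i=1..n. (f \<theta> (zs i) - F \<theta>)) = Y + X"
      unfolding X_def Y_def R_def by (rule sum.subset_diff[OF SI]) simp
    finally have eq: "emp_risk f n zs \<theta> - pop_risk M f \<theta> = (Y + X) / real n" by simp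
    have "\<bar>X\<bar> \<le> (\<Sum>i\<in>S. \<bar>f \<theta> (zs i) - F \<theta>\<bar>)" unfolding X_def by (rule sum_abs)
    also have "\<dots> \<le> (\<Sum>i\<in>S. B)"
      by (rule sum_mono) (use bnd[OF \<theta>in zsi] SI in auto)
    also have "\<dots> = real (card S) * B" by simp
    also have "\<dots> \<le> real (length idx) * B"
      using assms(8) unfolding S_def by (intro mult_right_mono) (auto simp: card_length)
    finally have Xb: "\<bar>X\<bar> \<le> real (length idx) * B" .
    have Yb: "\<bar>Y\<bar> \<le> \<epsilon>" using Rb Y_def by simp
    have "\<bar>(Y + X) / real n\<bar> = \<bar>Y + X\<bar> / real n" by simp
    also have "\<dots> \<le> (\<epsilon> + real (length idx) * B) / real n"
      using Xb Yb assms(11) by (intro divide_right_mono) auto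
    also have "\<dots> = B * real (length idx) / real n + B * sqrt (ln (2 / \<delta>) / (2 * real n))"
      unfolding \<epsilon>_def L_def using assms(11) by (simp add: field_simps)
    finally show ?thesis using eq \<theta>_def by simp
  qed
  have meas_compl: "emeasure P (space P - G) \<le> ennreal \<delta>"
  proof -
    interpret PSF: product_sigma_finite "\<lambda>_::nat. M"
      unfolding product_sigma_finite_def using assms(1) prob_space_imp_sigma_finite by blast
    define PS where "PS = PiM S (\<lambda>_. M)"
    define PR where "PR = PiM R (\<lambda>_. M)"
    interpret PS: prob_space PS unfolding PS_def by (rule prob_space_PiM) (use assms(1) in auto)
    interpret PR: prob_space PR unfolding PR_def by (rule prob_space_PiM) (use assms(1) in auto)
    have SR: "S \<inter> R = {}" "finite S" "finite R" "S \<union> R = {1..n}"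
      using SI unfolding R_def S_def by auto
    have dm: "distr (PS \<Otimes>\<^sub>M PR) P (merge S R) = P"
      using PSF.distr_merge[OF SR(1,2,3)] SR(4) unfolding PS_def PR_def P_def by simp
    have mm: "merge S R \<in> measurable (PS \<Otimes>\<^sub>M PR) P"
      using measurable_merge[where I=S and J=R and M="\<lambda>_. M"] SR(4) unfolding PS_def PR_def P_def by simp
    have cG: "space P - G \<in> sets P" using Gm by auto
    define A where "A = merge S R -` (space P - G) \<inter> space (PS \<Otimes>\<^sub>M PR)"
    have Am: "A \<in> sets (PS \<Otimes>\<^sub>M PR)" unfolding A_def by (rule measurable_sets[OF mm cG])
    have "emeasure P (space P - G) = emeasure (distr (PS \<Otimes>\<^sub>M PR) P (merge S R)) (space P - G)"
      by (simp only: dm)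
    also have "\<dots> = emeasure (PS \<Otimes>\<^sub>M PR) A"
      unfolding A_def by (rule emeasure_distr[OF mm cG])
    also have "\<dots> = (\<integral>\<^sup>+x. emeasure PR (Pair x -` A) \<partial>PS)"
      by (rule PR.emeasure_pair_measure_alt[OF Am])
    also have "\<dots> \<le> (\<integral>\<^sup>+x. ennreal \<delta> \<partial>PS)"
    proof (rule nn_integral_mono)
      fix x assume x: "x \<in> space PS"
      define \<theta>x where "\<theta>x = th (merge S R (x, \<lambda>_. undefined))"
      have \<theta>xin: "\<theta>x \<in> \<Theta>" unfolding \<theta>x_def by (rule thin)
      have mth: "th (merge S R (x, y)) = \<theta>x" for y
        unfolding \<theta>x_def th_def by (rule iter_cong) (simp add: S_def merge_def)
      have mP: "merge S R (x, y) \<in> space P" if "y \<in> space PR" for y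
        using measurable_space[OF mm, of "(x, y)"] x that by (simp add: space_pair_measure)
      have mR: "merge S R (x, y) i = y i" if "i \<in> R" for y i
        using that SR(1) by auto
      have sec: "Pair x -` A = {y \<in> space PR. \<epsilon> \<le> \<bar>\<Sum>i\<in>R. (f \<theta>x (y i) - F \<theta>x)\<bar>}"
      proof (intro set_eqI iffI)
        fix y assume "y \<in> Pair x -` A"
        then have y: "y \<in> space PR" and nG: "merge S R (x, y) \<notin> G"
          unfolding A_def using x by (auto simp: space_pair_measure)
        have "(\<Sum>i\<in>R. (f (th (merge S R (x, y))) (merge S R (x, y) i) - F (th (merge S R (x, y)))))
              = (\<Sum>i\<in>R. (f \<theta>x (y i) - F \<theta>x))"
          by (rule sum.cong) (simp_all add: mth mR)
        with nG mP[OF y] show "y \<in> {y \<in> space PR. \<epsilon> \<le> \<bar>\<Sum>i\<in>R. (f \<theta>x (y i) - F \<theta>x)\<bar>}"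
          unfolding G_def using y by auto
      next
        fix y assume "y \<in> {y \<in> space PR. \<epsilon> \<le> \<bar>\<Sum>i\<in>R. (f \<theta>x (y i) - F \<theta>x)\<bar>}"
        then have y: "y \<in> space PR" and ge: "\<epsilon> \<le> \<bar>\<Sum>i\<in>R. (f \<theta>x (y i) - F \<theta>x)\<bar>" by auto
        have "(\<Sum>i\<in>R. (f (th (merge S R (x, y))) (merge S R (x, y) i) - F (th (merge S R (x, y)))))
              = (\<Sum>i\<in>R. (f \<theta>x (y i) - F \<theta>x))"
          by (rule sum.cong) (simp_all add: mth mR)
        with ge mP[OF y] have "merge S R (x, y) \<notin> G" unfolding G_def by auto
        then show "y \<in> Pair x -` A"
          unfolding A_def using x y mP[OF y] by (auto simp: space_pair_measure)
      qed
      show "emeasure PR (Pair x -` A) \<le> ennreal \<delta>"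
      proof (cases "R = {}")
        case True
        then have "Pair x -` A = {}" using sec \<epsilon>pos by auto
        then show ?thesis by simp
      next
        case False
        have cR: "0 < real (card R)" "real (card R) \<le> real n"
        proof -
          show "0 < real (card R)" using False SR(3) by (simp add: card_gt_0_iff)
          have "card R \<le> card {1..n}" unfolding R_def by (rule card_mono) auto
          then show "real (card R) \<le> real n" by simp
        qed
        have h: "measure PR {y \<in> space PR. \<epsilon> \<le> \<bar>\<Sum>i\<in>R. (f \<theta>x (y i) - integral\<^sup>L M (f \<theta>x))\<bar>}
             \<le> 2 * exp (-2 * \<epsilon>\<^sup>2 / (real (card R) * B\<^sup>2))"
          unfolding PR_def
          by (rule hoeff_section[OF assms(1) SR(3) False assms(5)[OF \<theta>xin] assms(9)[OF \<theta>xin]])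
             (use \<epsilon>pos assms(8) in auto)
        have e2: "\<epsilon>\<^sup>2 = real n * B\<^sup>2 * L / 2"
        proof -
          have "(sqrt (L / (2 * real n)))\<^sup>2 = L / (2 * real n)" using L by simp
          then have "\<epsilon>\<^sup>2 = (real n * B)\<^sup>2 * (L / (2 * real n))"
            unfolding \<epsilon>_def by (simp only: power_mult_distrib)
          then show ?thesis using assms(11) by (simp add: power2_eq_square field_simps)
        qed
        have "-2 * \<epsilon>\<^sup>2 / (real (card R) * B\<^sup>2) = - (real n / real (card R)) * L"
          unfolding e2 using assms(8) cR by (simp add: field_simps)
        also have "\<dots> \<le> - L"
        proof -
          have "1 \<le> real n / real (card R)" using cR by simp
          then have "1 * L \<le> (real n / real (card R)) * L" using L by (intro mult_right_mono) auto
          then show ?thesis by simp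
        qed
        finally have "2 * exp (-2 * \<epsilon>\<^sup>2 / (real (card R) * B\<^sup>2)) \<le> 2 * exp (- L)" by simp
        also have "2 * exp (- L) = \<delta>"
          unfolding L_def using assms(12) by (simp add: exp_minus)
        finally have "measure PR (Pair x -` A) \<le> \<delta>"
          using h sec by (simp add: F_def pop_risk_def)
        then show ?thesis by (simp add: PR.emeasure_eq_measure ennreal_leI)
      qed
    qed
    also have "\<dots> = ennreal \<delta>" by (simp add: PS.emeasure_space_1)
    finally show ?thesis .
  qed
  interpret P: prob_space P unfolding P_def by (rule prob_space_PiM) (use assms(1) in auto)
  have "P.prob (space P - G) \<le> \<delta>"
    using meas_compl P.emeasure_eq_measure assms(12) by (simp add: ennreal_le_iff)
  then have "P.prob G \<ge> 1 - \<delta>" using P.prob_compl[OF Gm] by simp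
  then show ?thesis
    using Gm Ggood unfolding P_def th_def by blast
qed


end
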